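(* Let $(E,+,0)$ be an abelian group with a translation-invariant preorder $\le$ whose positive cone $E_+=\{x\in E:x\ge0\}$ is pointed ($E_+\cap(-E_+)=\{0\}$), and let $u\in E_+$. Let $\mathcal{A}$ be a finite set of group endomorphisms $T:E\to E$, closed under composition, each of which is monotone ($x\le y\Rightarrow T(x)\le T(y)$) and subunital ($T(u)\le u$). Define $d(T)=u-T(u)\ge0$ and assume the cocycle identity \[ d(T\circ S)=d(T)+T(d(S))\quad\text{for all }T,S\in\mathcal{A}. \] Then for every $T\in\mathcal{A}$ there exists $n$ with $1\le n\le|\mathcal{A}|$ such that $T^n(d(T))=0$.
   Context: Translation-invariant means $x\le y$ implies $x+z\le y+z$ for all $z$. *)

theory Defs
  imports Main
begin

end

theory Submission
  imports Defs
begin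

theorem theorem9p1:
  fixes le :: "'a::ab_group_add \<Rightarrow> 'a \<Rightarrow> bool"
    and u :: "'a"
    and \<A> :: "('a \<Rightarrow> 'a) set"
    and d :: "('a \<Rightarrow> 'a) \<Rightarrow> 'a"
  assumes refl: "\<And>x. le x x"
    and trans: "\<And>x y z. le x y \<Longrightarrow> le y z \<Longrightarrow> le x z"
    and transl_inv: "\<And>x y z. le x y \<Longrightarrow> le (x + z) (y + z)"
    and pointed: "{x. le 0 x} \<inter> uminus ` {x. le 0 x} = {0}"
    and u_pos: "le 0 u"
    and fin: "finite \<A>"
    and comp_closed: "\<And>T S. T \<in> \<A> \<Longrightarrow> S \<in> \<A> \<Longrightarrow> T \<circ> S \<in> \<A>"
    and additive: "\<And>T x y. T \<in> \<A> \<Longrightarrow> T (x + y) = T x + T y"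
    and monotone: "\<And>T x y. T \<in> \<A> \<Longrightarrow> le x y \<Longrightarrow> le (T x) (T y)"
    and subunital: "\<And>T. T \<in> \<A> \<Longrightarrow> le (T u) u"
    and d_def: "\<And>T. d T = u - T u"
    and cocycle: "\<And>T S. T \<in> \<A> \<Longrightarrow> S \<in> \<A> \<Longrightarrow> d (T \<circ> S) = d T + T (d S)"
  shows "\<forall>T\<in>\<A>. \<exists>n. 1 \<le> n \<and> n \<le> card \<A> \<and> (T ^^ n) (d T) = 0"
proof
  fix T assume TA: "T \<in> \<A>"
  have pow: "T ^^ Suc k \<in> \<A>" for k
  proof (induction k)
    case 0 thus ?case using TA by simp
  next
    case (Suc k)
    have "T ^^ Suc (Suc k) = T \<circ> T ^^ Suc k" by (simp only: funpow.simps(2))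
    thus ?case using comp_closed[OF TA Suc] by metis
  qed
  have padd: "(T ^^ k) (x + y) = (T ^^ k) x + (T ^^ k) y" for k x y
    by (induction k) (auto simp: additive TA)
  have p0: "(T ^^ k) 0 = 0" for k
    using padd[of k 0 0] by simp
  have ppos: "le 0 ((T ^^ k) x)" if "le 0 x" for k x
  proof (induction k)
    case 0 thus ?case using that by simp
  next
    case (Suc k)
    have T0: "T 0 = 0" using additive[OF TA, of 0 0] by simp
    show ?case using monotone[OF TA Suc] T0 by simp
  qed
  have dpos: "le 0 (d S)" if "S \<in> \<A>" for S
  proof -
    have "le (S u + - S u) (u + - S u)" using transl_inv subunital[OF that] by blast
    then show ?thesis by (simp add: d_def)
  qed
  have zero: "x = 0" if "x + y = 0" "le 0 x" "le 0 y" for x y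
  proof -
    have "y = - x" using that(1) by (simp add: eq_neg_iff_add_eq_0 add.commute)
    hence "x \<in> {x. le 0 x} \<inter> uminus ` {x. le 0 x}" using that
      by (auto intro!: image_eqI[of x uminus "- x"])
    thus ?thesis using pointed by auto
  qed
  have key: "(T ^^ i) (d T) = 0" if "T ^^ i = T ^^ (i + Suc k)" "i \<ge> 1" for i k
  proof -
    have "T ^^ (i + Suc k) = T ^^ i \<circ> T ^^ Suc k" by (simp only: funpow_add)
    have iA: "T ^^ i \<in> \<A>" using pow[of "i - 1"] that(2) by simp
    have "d (T ^^ i) = d (T ^^ i) + (T ^^ i) (d (T ^^ Suc k))"
      using cocycle[OF iA pow[of k]] that(1) \<open>T ^^ (i + Suc k) = T ^^ i \<circ> T ^^ Suc k\<close> by metis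
    hence z: "(T ^^ i) (d (T ^^ Suc k)) = 0" by simp
    show ?thesis
    proof (cases k)
      case 0 thus ?thesis using z by simp
    next
      case (Suc m)
      have "T ^^ Suc k = T \<circ> T ^^ Suc m" using Suc by (simp only: funpow.simps(2))
      hence "d (T ^^ Suc k) = d T + T (d (T ^^ Suc m))" using cocycle[OF TA pow[of m]] by simp
      hence "(T ^^ i) (d T) + (T ^^ i) (T (d (T ^^ Suc m))) = 0" using z padd by simp
      moreover have "le 0 ((T ^^ i) (T (d (T ^^ Suc m))))"
        by (rule ppos, rule ppos[of _ 1, simplified], rule dpos[OF pow])
      ultimately show ?thesis by (rule zero[OF _ ppos[OF dpos[OF TA]]])
    qed
  qed
  have "\<not> inj_on (\<lambda>i. T ^^ i) {1..card \<A> + 1}"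
  proof
    assume inj: "inj_on (\<lambda>i. T ^^ i) {1..card \<A> + 1}"
    have "(\<lambda>i. T ^^ i) ` {1..card \<A> + 1} \<subseteq> \<A>"
    proof
      fix S assume "S \<in> (\<lambda>i. T ^^ i) ` {1..card \<A> + 1}"
      then obtain i where "i \<ge> 1" "S = T ^^ i" by auto
      thus "S \<in> \<A>" using pow[of "i - 1"] by simp
    qed
    from card_inj_on_le[OF inj this fin] show False by simp
  qed
  then obtain i j where ij: "i \<in> {1..card \<A> + 1}" "j \<in> {1..card \<A> + 1}" "i \<noteq> j" "T ^^ i = T ^^ j"
    unfolding inj_on_def by blast
  show "\<exists>n. 1 \<le> n \<and> n \<le> card \<A> \<and> (T ^^ n) (d T) = 0"
  proof (cases "i < j")
    case True
    from less_imp_Suc_add[OF True] obtain k where "j = Suc (i + k)" by blast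
    hence "j = i + Suc k" by simp
    hence "T ^^ i = T ^^ (i + Suc k)" using ij(4) by (simp only:)
    moreover have "1 \<le> i" using ij(1) by simp
    ultimately have "(T ^^ i) (d T) = 0" by (rule key)
    moreover have "1 \<le> i" "i \<le> card \<A>" using ij(1,2) True by auto
    ultimately show ?thesis by blast
  next
    case False
    hence "j < i" using ij(3) by simp
    from less_imp_Suc_add[OF this] obtain k where "i = Suc (j + k)" by blast
    hence "i = j + Suc k" by simp
    hence "T ^^ j = T ^^ (j + Suc k)" using ij(4) by (simp only:)
    moreover have "1 \<le> j" using ij(2) by simp
    ultimately have "(T ^^ j) (d T) = 0" by (rule key)
    moreover have "1 \<le> j" "j \<le> card \<A>" using ij(1,2,3) False by auto
    ultimately show ?thesis by blast
  qed
qed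

end
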